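(* Let $n\ge 2$ and let $A$ be an $n\times n$ real matrix with a real eigenpair $(\lambda,v)$ such that $v$ has no zero components, and let $D=\mathrm{diag}(v)$. Then for every $p\in\mathbb{N}\cup\{\infty\}$ and every $k\in\mathbb{N}$, $$|\det(A)|\le|\lambda|\,\big[\tau_p(D^{-1}A^kD)\big]^{\frac{n-1}{k}}.$$ In particular, $|\det(A)|\le|\lambda|\,\tau_p(D^{-1}A^{n-1}D)$.
   Context: For an $n\times n$ real matrix $M$ ($n\ge 2$) and $p\in\mathbb{N}\cup\{\infty\}$, define $$\tau_p(M)=\max\{\|M^Tx\|_p: x\in\mathbb{R}^n,\ x^Te=0,\ \|x\|_p=1\},$$ where $e$ is the all-ones vector and $\|\cdot\|_p$ is the $\ell_p$-norm. *)

theory Defs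
  imports "HOL-Analysis.Analysis" "HOL-Library.Extended_Nat"
begin

definition lpnorm :: "enat \<Rightarrow> real^'n \<Rightarrow> real" where
  "lpnorm p x = (case p of
      enat q \<Rightarrow> (\<Sum>i\<in>UNIV. \<bar>x $ i\<bar> powr real q) powr (1 / real q)
    | \<infinity> \<Rightarrow> Max {\<bar>x $ i\<bar> | i. True})"

definition tau :: "enat \<Rightarrow> real^'n^'n \<Rightarrow> real" where
  "tau p M = Sup {lpnorm p (transpose M *v x) | x. sum (\<lambda>i. x $ i) UNIV = 0 \<and> lpnorm p x = 1}"

definition diagm :: "real^'n \<Rightarrow> real^'n^'n" where
  "diagm v = (\<chi> i j. if i = j then v $ i else 0)"

primrec matpow :: "real^'n^'n \<Rightarrow> nat \<Rightarrow> real^'n^'n" where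
  "matpow A 0 = mat 1"
| "matpow A (Suc k) = A ** matpow A k"

end

theory Submission
  imports Defs
begin

lemma lp_cases [consumes 1, case_names inf fin]:
  assumes "(p::enat) \<ge> 1"
  obtains (inf) "p = \<infinity>" | (fin) q where "p = enat q" "q \<ge> 1"
  using assms by (cases p) (auto simp: one_enat_def)

lemma fin_range: "finite {\<bar>(x::real^'n) $ i\<bar> | i. True}"
  by (simp add: full_SetCompr_eq)

lemma lpnorm_ge_comp:
  fixes x :: "real^'n"
  assumes "(p::enat) \<ge> 1" shows "\<bar>x $ i\<bar> \<le> lpnorm p x"
using assms proof (cases rule: lp_cases)
  case inf
  then show ?thesis using fin_range[of x] by (auto simp: lpnorm_def intro!: Max_ge)
next
  case (fin q)
  have "\<bar>x $ i\<bar> = (\<bar>x $ i\<bar> powr real q) powr (1 / real q)"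
    using fin by (simp add: powr_powr)
  also have "\<dots> \<le> (\<Sum>j\<in>UNIV. \<bar>x $ j\<bar> powr real q) powr (1 / real q)"
    by (rule powr_mono2) (use fin in \<open>auto intro!: member_le_sum\<close>)
  finally show ?thesis using fin by (simp add: lpnorm_def)
qed

lemma lpnorm_nonneg: "(p::enat) \<ge> 1 \<Longrightarrow> lpnorm p (x::real^'n) \<ge> 0"
  using lpnorm_ge_comp[of p x] abs_ge_zero order_trans by blast

lemma lpnorm_le:
  fixes x :: "real^'n"
  assumes p: "(p::enat) \<ge> 1" and b: "\<And>i. \<bar>x $ i\<bar> \<le> m"
  shows "lpnorm p x \<le> real CARD('n) * m"
proof -
  obtain i0 :: 'n where True by blast
  have m0: "m \<ge> 0" using b[of i0] by linarith
  have n1: "real CARD('n) \<ge> 1" by simp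
  show ?thesis
  using p proof (cases rule: lp_cases)
    case inf
    have "lpnorm p x \<le> m" using inf fin_range[of x] b by (auto simp: lpnorm_def full_SetCompr_eq)
    also have "m \<le> real CARD('n) * m" using m0 n1 by (simp add: mult_le_cancel_right1)
    finally show ?thesis .
  next
    case (fin q)
    have "(\<Sum>j\<in>UNIV. \<bar>x $ j\<bar> powr real q) \<le> (\<Sum>j\<in>(UNIV::'n set). m powr real q)"
      by (rule sum_mono, rule powr_mono2) (use fin b in auto)
    also have "\<dots> = real CARD('n) * m powr real q" by simp
    finally have s: "(\<Sum>j\<in>UNIV. \<bar>x $ j\<bar> powr real q) \<le> real CARD('n) * m powr real q" .
    have "lpnorm p x \<le> (real CARD('n) * m powr real q) powr (1 / real q)"
      unfolding fin lpnorm_def by (simp, rule powr_mono2) (use fin s in \<open>auto intro: sum_nonneg\<close>)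
    also have "\<dots> = real CARD('n) powr (1 / real q) * m"
      using fin m0 by (simp add: powr_mult powr_powr)
    also have "real CARD('n) powr (1 / real q) \<le> real CARD('n) powr 1"
      by (rule powr_mono) (use fin in auto)
    hence "real CARD('n) powr (1 / real q) * m \<le> real CARD('n) * m"
      using m0 by (simp add: mult_right_mono)
    finally show ?thesis .
  qed
qed

lemma lpnorm_scale:
  fixes x :: "real^'n"
  assumes p: "(p::enat) \<ge> 1"
  shows "lpnorm p (c *s x) = \<bar>c\<bar> * lpnorm p x"
using p proof (cases rule: lp_cases)
  case inf
  have mono: "mono (\<lambda>y::real. \<bar>c\<bar> * y)" by (auto intro!: monoI mult_left_mono)
  have "\<bar>c\<bar> * Max {\<bar>x $ i\<bar> | i. True} = Max ((\<lambda>y. \<bar>c\<bar> * y) ` {\<bar>x $ i\<bar> | i. True})"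
    by (rule mono_Max_commute[OF mono fin_range]) auto
  also have "(\<lambda>y. \<bar>c\<bar> * y) ` {\<bar>x $ i\<bar> | i. True} = {\<bar>(c *s x) $ i\<bar> | i. True}"
    by (auto simp: abs_mult)
  finally show ?thesis using inf by (simp add: lpnorm_def)
next
  case (fin q)
  have "(\<Sum>j\<in>UNIV. \<bar>(c *s x) $ j\<bar> powr real q) = \<bar>c\<bar> powr real q * (\<Sum>j\<in>UNIV. \<bar>x $ j\<bar> powr real q)"
    by (simp add: abs_mult powr_mult sum_distrib_left)
  then show ?thesis using fin by (simp add: lpnorm_def powr_mult powr_powr)
qed

lemma lpnorm_zero: "(p::enat) \<ge> 1 \<Longrightarrow> lpnorm p (0::real^'n) = 0"
  using lpnorm_scale[of p 0 "0::real^'n"] by simp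

definition ones :: "real^'n" where "ones = (\<chi> i. 1)"

lemma tv_comp: "(transpose M *v (y::real^'n)) $ j = (\<Sum>i\<in>UNIV. M$i$j * y$i)"
  by (simp add: matrix_vector_mult_def transpose_def mult.commute)

lemma sum_transpose:
  fixes M :: "real^'n^'n"
  assumes eig: "M *v ones = \<mu> *s ones"
  shows "sum (\<lambda>j. (transpose M *v y) $ j) UNIV = \<mu> * sum (\<lambda>i. y $ i) UNIV"
proof -
  have r: "\<And>i. (\<Sum>j\<in>UNIV. M$i$j) = \<mu>"
  proof -
    fix i
    have "(M *v ones) $ i = \<mu>" using eig by (simp add: ones_def)
    then show "(\<Sum>j\<in>UNIV. M$i$j) = \<mu>" by (simp add: matrix_vector_mult_def ones_def)
  qed
  have "sum (\<lambda>j. (transpose M *v y) $ j) UNIV = (\<Sum>j\<in>UNIV. \<Sum>i\<in>UNIV. M$i$j * y$i)"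
    by (simp only: tv_comp)
  also have "\<dots> = (\<Sum>i\<in>UNIV. y$i * (\<Sum>j\<in>UNIV. M$i$j))"
    by (subst sum.swap) (simp add: sum_distrib_left mult.commute)
  also have "\<dots> = \<mu> * sum (\<lambda>i. y $ i) UNIV" by (simp add: r sum_distrib_left mult.commute)
  finally show ?thesis .
qed

lemma two_elems:
  assumes "CARD('n) \<ge> 2"
  shows "\<exists>j::'n. j \<noteq> i"
proof (rule ccontr)
  assume "\<not> ?thesis"
  hence "(UNIV::'n set) = {i}" by auto
  hence "CARD('n) = card {i}" by (simp only:)
  hence "CARD('n) = 1" by simp
  with assms show False by simp
qed

lemma sum_axis_diff:
  assumes "i \<noteq> j"
  shows "sum (\<lambda>l. (axis i (1::real) - axis j 1) $ l) (UNIV::'n::finite set) = 0"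
  by (simp add: axis_def sum_subtractf)

lemma tau_facts:
  fixes M :: "real^'n^'n"
  assumes p: "p \<ge> 1" and n2: "CARD('n) \<ge> 2"
  shows "tau p M \<ge> 0"
    and "sum (\<lambda>i. y$i) UNIV = 0 \<Longrightarrow> lpnorm p (transpose M *v y) \<le> tau p M * lpnorm p y"
proof -
  define S where "S = {lpnorm p (transpose M *v x) | x. sum (\<lambda>i. x $ i) UNIV = 0 \<and> lpnorm p x = 1}"
  have tS: "tau p M = Sup S" by (simp add: tau_def S_def)
  define C where "C = (\<Sum>i\<in>UNIV. \<Sum>j\<in>UNIV. \<bar>M$i$j\<bar>)"
  have bdd: "bdd_above S"
  proof (rule bdd_aboveI)
    fix s assume "s \<in> S"
    then obtain x where x: "s = lpnorm p (transpose M *v x)" "lpnorm p x = 1" by (auto simp: S_def)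
    have xb: "\<bar>x$i\<bar> \<le> 1" for i using lpnorm_ge_comp[OF p, of x i] x by simp
    have "\<bar>(transpose M *v x) $ j\<bar> \<le> C" for j
    proof -
      have "\<bar>(transpose M *v x) $ j\<bar> \<le> (\<Sum>i\<in>UNIV. \<bar>M$i$j * x$i\<bar>)"
        unfolding tv_comp by (rule sum_abs)
      also have "\<dots> \<le> (\<Sum>i\<in>UNIV. \<bar>M$i$j\<bar>)"
        by (rule sum_mono) (use xb in \<open>auto simp: abs_mult intro: mult_left_le\<close>)
      also have "\<dots> \<le> C" unfolding C_def
        by (rule sum_mono) (auto intro: member_le_sum)
      finally show ?thesis .
    qed
    then show "s \<le> real CARD('n) * C" using lpnorm_le[OF p] x(1) by blast
  qed
  obtain i :: 'n where True by blast
  obtain j :: 'n where ij: "j \<noteq> i" using two_elems[OF n2] by blast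
  define x0 where "x0 = axis i (1::real) - axis j 1"
  define c where "c = lpnorm p x0"
  have "\<bar>x0 $ i\<bar> = 1" using ij by (simp add: x0_def axis_def)
  hence c0: "c > 0" using lpnorm_ge_comp[OF p, of x0 i] by (simp add: c_def)
  define x where "x = (1/c) *s x0"
  have "lpnorm p x = 1" using c0 by (simp add: x_def lpnorm_scale[OF p] c_def)
  moreover have "sum (\<lambda>i. x $ i) UNIV = (1/c) * sum (\<lambda>l. x0 $ l) UNIV"
    unfolding x_def by (simp add: sum_distrib_left)
  hence "sum (\<lambda>i. x $ i) UNIV = 0"
    using sum_axis_diff[of i j] ij by (simp add: x0_def)
  ultimately have "lpnorm p (transpose M *v x) \<in> S" by (auto simp: S_def)
  hence "lpnorm p (transpose M *v x) \<le> tau p M" unfolding tS by (rule cSup_upper[OF _ bdd])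
  thus t0: "tau p M \<ge> 0" using lpnorm_nonneg[OF p] order_trans by blast
  assume y: "sum (\<lambda>i. y$i) UNIV = 0"
  show "lpnorm p (transpose M *v y) \<le> tau p M * lpnorm p y"
  proof (cases "lpnorm p y = 0")
    case True
    hence "y = 0" using lpnorm_ge_comp[OF p, of y] by (simp add: vec_eq_iff)
    then show ?thesis by (simp add: lpnorm_zero[OF p])
  next
    case False
    define d where "d = lpnorm p y"
    have d0: "d > 0" using False lpnorm_nonneg[OF p, of y] by (simp add: d_def)
    define y' where "y' = (1/d) *s y"
    have "lpnorm p y' = 1" using d0 by (simp add: y'_def lpnorm_scale[OF p] d_def)
    moreover have "sum (\<lambda>i. y' $ i) UNIV = 0"
      using y by (simp add: y'_def sum_divide_distrib[symmetric])
    ultimately have "lpnorm p (transpose M *v y') \<in> S" by (auto simp: S_def)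
    hence "lpnorm p (transpose M *v y') \<le> tau p M" unfolding tS by (rule cSup_upper[OF _ bdd])
    moreover have "lpnorm p (transpose M *v y') = (1/d) * lpnorm p (transpose M *v y)"
      using d0 by (simp add: y'_def vector_scalar_commute lpnorm_scale[OF p])
    ultimately have "(1/d) * lpnorm p (transpose M *v y) \<le> tau p M" by simp
    then show ?thesis using d0 by (simp add: d_def field_simps)
  qed
qed

lemma matpow_eig:
  assumes "M *v w = \<mu> *s w"
  shows "matpow M m *v w = (\<mu> ^ m) *s w"
  by (induction m) (simp_all add: matrix_vector_mul_assoc[symmetric] assms vector_scalar_commute)

lemma det_matpow: "det (matpow M m) = det M ^ m"
  by (induction m) (simp_all add: det_mul)

lemma matpow_bound:
  fixes M :: "real^'n^'n"
  assumes p: "p \<ge> 1" and n2: "CARD('n) \<ge> 2" and eig: "M *v ones = \<mu> *s ones"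
  shows "sum (\<lambda>i. y$i) UNIV = 0 \<Longrightarrow> lpnorm p (transpose (matpow M m) *v y) \<le> tau p M ^ m * lpnorm p y"
proof (induction m arbitrary: y)
  case 0
  then show ?case by (simp add: transpose_mat)
next
  case (Suc m)
  have e: "transpose (matpow M (Suc m)) *v y = transpose (matpow M m) *v (transpose M *v y)"
    by (simp only: matpow.simps matrix_transpose_mul matrix_vector_mul_assoc)
  have s: "sum (\<lambda>i. (transpose M *v y) $ i) UNIV = 0" using sum_transpose[OF eig] Suc.prems by simp
  have "lpnorm p (transpose (matpow M (Suc m)) *v y) \<le> tau p M ^ m * lpnorm p (transpose M *v y)"
    unfolding e by (rule Suc.IH[OF s])
  also have "\<dots> \<le> tau p M ^ m * (tau p M * lpnorm p y)"
    by (rule mult_left_mono) (use tau_facts[OF p n2] Suc.prems in auto)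
  finally show ?case by (simp add: mult_ac)
qed




lemma sd1: "(\<Sum>l\<in>(UNIV::'n::finite set). (f l::real) * (if l = j then 1 else 0)) = f j"
proof -
  have "(\<Sum>l\<in>(UNIV::'n set). f l * (if l = j then 1 else 0)) = (\<Sum>l\<in>UNIV. if l = j then f l else 0)"
    by (rule sum.cong) auto
  then show ?thesis by simp
qed

lemma sd2: "(\<Sum>l\<in>(UNIV::'n::finite set). (if l = j then 1 else 0) * (f l::real)) = f j"
  using sd1[of f j] by (simp add: mult.commute)

definition Emat :: "'n \<Rightarrow> real^'n^'n" where
  "Emat j0 = (\<chi> i j. if j = j0 then 1 else if i = j then 1 else 0)"
definition Fmat :: "'n \<Rightarrow> real^'n^'n" where
  "Fmat j0 = (\<chi> i j. if j = j0 then (if i = j0 then 1 else -1) else if i = j then 1 else 0)"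

lemma F_row_j0: "Fmat j0 $ j0 $ r = (if r = j0 then 1 else 0)"
  by (simp add: Fmat_def)

lemma F_row: "i \<noteq> j0 \<Longrightarrow> Fmat j0 $ i $ r = (if r = i then 1 else 0) - (if r = j0 then 1 else 0)"
  by (auto simp: Fmat_def)

lemma E_col: "Emat j0 $ l $ j = (if j = j0 then 1 else if l = j then 1 else 0)"
  by (simp add: Emat_def)

lemma FE: "Fmat j0 ** Emat j0 = mat 1"
proof -
  have "(Fmat j0 ** Emat j0) $ i $ j = (if i = j then 1 else 0)" for i j
  proof (cases "j = j0")
    case True
    then have "(Fmat j0 ** Emat j0) $ i $ j = (\<Sum>l\<in>UNIV. Fmat j0 $ i $ l)"
      by (simp add: matrix_matrix_mult_def E_col)
    also have "\<dots> = (if i = j then 1 else 0)"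
      using True by (cases "i = j0") (simp_all add: F_row_j0 F_row sum_subtractf)
    finally show ?thesis .
  next
    case False
    then have "(Fmat j0 ** Emat j0) $ i $ j = (\<Sum>l\<in>UNIV. Fmat j0 $ i $ l * (if l = j then 1 else 0))"
      by (simp add: matrix_matrix_mult_def E_col)
    also have "\<dots> = Fmat j0 $ i $ j" by (rule sd1)
    also have "\<dots> = (if i = j then 1 else 0)" using False by (simp add: Fmat_def)
    finally show ?thesis .
  qed
  then show ?thesis by (simp add: vec_eq_iff mat_def)
qed

lemma FN_entry:
  fixes N :: "real^'n^'n"
  shows "(Fmat j0 ** N) $ i $ l = (if i = j0 then N $ j0 $ l else N $ i $ l - N $ j0 $ l)"
proof (cases "i = j0")
  case True
  then show ?thesis by (simp add: matrix_matrix_mult_def F_row_j0 sd2)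
next
  case False
  then show ?thesis
    by (simp add: matrix_matrix_mult_def F_row left_diff_distrib sum_subtractf sd2)
qed




lemma X_entry:
  fixes N :: "real^'n^'n"
  shows "(Fmat j0 ** N ** Emat j0) $ i $ j =
     (if j = j0 then (\<Sum>l\<in>UNIV. (Fmat j0 ** N) $ i $ l) else (Fmat j0 ** N) $ i $ j)"
proof (cases "j = j0")
  case True
  then show ?thesis by (simp add: matrix_matrix_mult_def E_col)
next
  case False
  then show ?thesis by (simp add: matrix_matrix_mult_def E_col sd1)
qed

lemma det_X: "det (Fmat j0 ** N ** Emat j0) = det N"
proof -
  have "det (Fmat j0) * det (Emat j0) = 1" using FE[of j0] det_mul[of "Fmat j0" "Emat j0"] by simp
  then show ?thesis by (simp add: det_mul)
qed

lemma X_props: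
  fixes N :: "real^'n^'n"
  assumes eig: "N *v ones = \<nu> *s ones"
  shows "(Fmat j0 ** N ** Emat j0) $ j0 $ j0 = \<nu>"
    and "i \<noteq> j0 \<Longrightarrow> (Fmat j0 ** N ** Emat j0) $ i $ j0 = 0"
    and "i \<noteq> j0 \<Longrightarrow> j \<noteq> j0 \<Longrightarrow> (Fmat j0 ** N ** Emat j0) $ i $ j = N $ i $ j - N $ j0 $ j"
proof -
  have r: "(\<Sum>j\<in>UNIV. N$i$j) = \<nu>" for i
  proof -
    have "(N *v ones) $ i = \<nu>" using eig by (simp add: ones_def)
    then show "(\<Sum>j\<in>UNIV. N$i$j) = \<nu>" by (simp add: matrix_vector_mult_def ones_def)
  qed
  show "(Fmat j0 ** N ** Emat j0) $ j0 $ j0 = \<nu>" by (simp add: X_entry FN_entry r)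
  show "i \<noteq> j0 \<Longrightarrow> (Fmat j0 ** N ** Emat j0) $ i $ j0 = 0"
    by (simp add: X_entry FN_entry r sum_subtractf)
  show "i \<noteq> j0 \<Longrightarrow> j \<noteq> j0 \<Longrightarrow> (Fmat j0 ** N ** Emat j0) $ i $ j = N $ i $ j - N $ j0 $ j"
    by (simp add: X_entry FN_entry)
qed

lemma det_bound:
  fixes X :: "real^'n^'n"
  assumes z: "\<And>i. i \<noteq> j0 \<Longrightarrow> X$i$j0 = 0"
    and b: "\<And>i j. i \<noteq> j0 \<Longrightarrow> j \<noteq> j0 \<Longrightarrow> \<bar>X$i$j\<bar> \<le> K" and K0: "K \<ge> 0"
  shows "\<bar>det X\<bar> \<le> fact CARD('n) * (\<bar>X$j0$j0\<bar> * K ^ (CARD('n) - 1))"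
proof -
  define B where "B = \<bar>X$j0$j0\<bar> * K ^ (CARD('n) - 1)"
  have B0: "B \<ge> 0" using K0 by (simp add: B_def)
  have hterm: "\<bar>prod (\<lambda>i. X$i$p i) UNIV\<bar> \<le> B" if pp: "p permutes (UNIV::'n set)" for p
  proof (cases "p j0 = j0")
    case False
    obtain i where i: "p i = j0" using pp by (metis permutes_surj surjD)
    have "i \<noteq> j0" using i False by auto
    hence "prod (\<lambda>i. X$i$p i) UNIV = 0" using z i by (intro prod_zero) auto
    hence "\<bar>prod (\<lambda>i. X$i$p i) UNIV\<bar> = 0" by (simp only: abs_zero)
    then show ?thesis using B0 by linarith
  next
    case True
    have inj: "p i \<noteq> j0" if "i \<noteq> j0" for i
      using that True pp by (metis permutes_inj injD)
    have "prod (\<lambda>i. X$i$p i) UNIV = X$j0$j0 * prod (\<lambda>i. X$i$p i) (UNIV - {j0})"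
      using True by (simp add: prod.remove[of UNIV j0])
    hence "\<bar>prod (\<lambda>i. X$i$p i) UNIV\<bar> = \<bar>X$j0$j0\<bar> * prod (\<lambda>i. \<bar>X$i$p i\<bar>) (UNIV - {j0})"
      by (simp add: abs_mult abs_prod)
    also have "prod (\<lambda>i. \<bar>X$i$p i\<bar>) (UNIV - {j0}) \<le> prod (\<lambda>i. K) (UNIV - {j0})"
      by (rule prod_mono) (use b inj in auto)
    also have "prod (\<lambda>i. K) (UNIV - {j0}) = K ^ (CARD('n) - 1)"
      by (simp add: card_Diff_singleton)
    finally show ?thesis by (simp add: B_def mult_left_mono)
  qed
  have "\<bar>det X\<bar> \<le> (\<Sum>p\<in>{p. p permutes (UNIV::'n set)}. \<bar>of_int (sign p) * prod (\<lambda>i. X$i$p i) UNIV\<bar>)"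
    unfolding det_def by (rule sum_abs)
  also have "\<dots> \<le> (\<Sum>p\<in>{p. p permutes (UNIV::'n set)}. B)"
    by (rule sum_mono) (simp add: abs_mult sign_def hterm)
  also have "\<dots> = fact CARD('n) * B" by (simp add: card_permutations)
  finally show ?thesis by (simp add: B_def)
qed

lemma pow_limit:
  fixes a b C :: real
  assumes a0: "a \<ge> 0" and b0: "b \<ge> 0" and h: "\<And>m. m \<ge> 1 \<Longrightarrow> a^m \<le> C * b^m"
  shows "a \<le> b"
proof (rule ccontr)
  assume "\<not> a \<le> b"
  hence ab: "b < a" by simp
  show False
  proof (cases "b = 0")
    case True
    then show False using h[of 1] ab by simp
  next
    case False
    hence bp: "b > 0" using b0 by simp
    have x1: "a / b > 1" using ab bp by simp
    obtain m where m: "C < (a/b)^m" using real_arch_pow[OF x1] by blast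
    have "(a/b)^m \<le> (a/b)^Suc m" by (rule power_increasing) (use x1 in auto)
    with m have "C < (a/b)^Suc m" by simp
    hence "C * b^Suc m < a^Suc m" using bp by (simp add: power_divide field_simps)
    with h[of "Suc m"] show False by simp
  qed
qed




lemma main_ineq:
  fixes M :: "real^'n^'n"
  assumes p: "p \<ge> 1" and n2: "CARD('n) \<ge> 2" and eig: "M *v ones = \<mu> *s ones"
  shows "\<bar>det M\<bar> \<le> \<bar>\<mu>\<bar> * tau p M ^ (CARD('n) - 1)"
proof -
  define t where "t = tau p M"
  define n where "n = CARD('n)"
  have t0: "t \<ge> 0" using tau_facts(1)[OF p n2] by (simp add: t_def)
  obtain j0 :: 'n where True by blast
  show ?thesis
  proof (rule pow_limit[where C = "fact n * real n ^ (n - 1)"])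
    show "\<bar>det M\<bar> \<ge> 0" by simp
    show "\<bar>\<mu>\<bar> * tau p M ^ (CARD('n) - 1) \<ge> 0" using t0 by (simp add: t_def)
    fix m :: nat assume "m \<ge> 1"
    define N where "N = matpow M m"
    define X where "X = Fmat j0 ** N ** Emat j0"
    have eN: "N *v ones = (\<mu> ^ m) *s ones" unfolding N_def by (rule matpow_eig[OF eig])
    have tm0: "t ^ m \<ge> 0" using t0 by simp
    have entry: "\<bar>X$i$j\<bar> \<le> t ^ m * real n" if ij: "i \<noteq> j0" "j \<noteq> j0" for i j
    proof -
      define x0 where "x0 = axis i (1::real) - axis j0 1"
      have "(transpose N *v x0) $ j = N$i$j - N$j0$j"
        unfolding tv_comp using ij by (simp add: x0_def axis_def sum_subtractf right_diff_distrib sd1)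
      hence "\<bar>X$i$j\<bar> = \<bar>(transpose N *v x0) $ j\<bar>" using X_props(3)[OF eN ij] by (simp add: X_def)
      also have "\<dots> \<le> lpnorm p (transpose N *v x0)" by (rule lpnorm_ge_comp[OF p])
      also have "\<dots> \<le> t ^ m * lpnorm p x0" unfolding N_def t_def
        by (rule matpow_bound[OF p n2 eig]) (use ij sum_axis_diff[of i j0] in \<open>simp add: x0_def\<close>)
      also have "lpnorm p x0 \<le> real n * 1" unfolding n_def
        by (rule lpnorm_le[OF p]) (auto simp: x0_def axis_def)
      finally show ?thesis using tm0 by (simp add: mult_left_mono order_trans)
    qed
    have "\<bar>det M\<bar> ^ m = \<bar>det X\<bar>" by (simp add: X_def det_X N_def det_matpow power_abs)
    also have "\<dots> \<le> fact n * (\<bar>X$j0$j0\<bar> * (t ^ m * real n) ^ (n - 1))"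
      unfolding n_def by (rule det_bound) (use X_props(2)[OF eN] entry tm0 in \<open>auto simp: X_def n_def\<close>)
    also have "\<dots> = fact n * real n ^ (n - 1) * (\<bar>\<mu>\<bar> * t ^ (n - 1)) ^ m"
      using X_props(1)[OF eN] by (simp add: X_def power_mult_distrib power_abs
          power_mult[symmetric] mult.commute mult.left_commute)
    finally show "\<bar>det M\<bar> ^ m \<le> fact n * real n ^ (n - 1) * (\<bar>\<mu>\<bar> * tau p M ^ (CARD('n) - 1)) ^ m"
      by (simp add: t_def n_def)
  qed
qed




lemma root_step:
  fixes a l t :: real
  assumes a0: "a \<ge> 0" and t0: "t \<ge> 0" and k: "k \<ge> 1" and d1: "d \<ge> 1" and h: "a^k \<le> \<bar>l\<bar>^k * t^d"
  shows "a \<le> \<bar>l\<bar> * t powr (real d / real k)"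
proof (cases "a = 0")
  case True
  then show ?thesis using t0 by simp
next
  case False
  hence ap: "a > 0" using a0 by simp
  hence "a^k > 0" by simp
  hence pos: "\<bar>l\<bar>^k * t^d > 0" using h by linarith
  hence lp: "\<bar>l\<bar> > 0"
    using k by (metis abs_ge_zero less_eq_real_def mult_eq_0_iff power_0_left zero_less_abs_iff not_one_le_zero)
  have tp: "t > 0"
  proof (rule ccontr)
    assume "\<not> t > 0" hence "t = 0" using t0 by simp
    with pos d1 show False by (cases d) auto
  qed
  have kp: "real k > 0" using k by simp
  have "a = (a powr real k) powr (1 / real k)" using ap kp by (simp add: powr_powr)
  also have "a powr real k = a^k" using ap by (simp add: powr_realpow)
  also have "(a^k) powr (1 / real k) \<le> (\<bar>l\<bar>^k * t^d) powr (1 / real k)"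
    by (rule powr_mono2) (use h ap in auto)
  also have "\<bar>l\<bar>^k * t^d = \<bar>l\<bar> powr real k * t powr real d"
    using lp tp by (simp add: powr_realpow)
  also have "(\<bar>l\<bar> powr real k * t powr real d) powr (1 / real k) = \<bar>l\<bar> * t powr (real d / real k)"
    using lp tp kp by (simp add: powr_mult powr_powr)
  finally show ?thesis .
qed

lemma diag_mult: "diagm a ** diagm b = diagm (\<chi> i. a$i * b$i)"
proof -
  have "(diagm a ** diagm b) $ i $ j = diagm (\<chi> i. a$i * b$i) $ i $ j" for i j
  proof -
    have "(diagm a ** diagm b) $ i $ j = (\<Sum>l\<in>UNIV. (if i = l then a$i else 0) * (if l = j then b$l else 0))"
      by (simp add: diagm_def matrix_matrix_mult_def)
    also have "\<dots> = (\<Sum>l\<in>UNIV. if l = i then (if i = j then a$i * b$i else 0) else 0)"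
      by (rule sum.cong) auto
    also have "\<dots> = diagm (\<chi> i. a$i * b$i) $ i $ j" by (simp add: diagm_def)
    finally show ?thesis .
  qed
  then show ?thesis by (simp add: vec_eq_iff)
qed

lemma diag_one: "diagm (\<chi> i. 1) = mat 1"
  by (simp add: diagm_def mat_def vec_eq_iff)

theorem corollary4:
  fixes A :: "real^'n^'n" and v :: "real^'n" and lam :: real
  assumes n2: "CARD('n) \<ge> 2"
    and eig: "A *v v = lam *\<^sub>R v"
    and nz: "\<forall>i. v $ i \<noteq> 0"
  shows "(\<forall>p::enat. p \<ge> 1 \<longrightarrow> (\<forall>k::nat. k \<ge> 1 \<longrightarrow>
            \<bar>det A\<bar> \<le> \<bar>lam\<bar> * (tau p (matrix_inv (diagm v) ** matpow A k ** diagm v))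
                                powr ((real CARD('n) - 1) / real k)))
       \<and> (\<forall>p::enat. p \<ge> 1 \<longrightarrow>
            \<bar>det A\<bar> \<le> \<bar>lam\<bar> * tau p (matrix_inv (diagm v) ** matpow A (CARD('n) - 1) ** diagm v))"
proof -
  define D where "D = diagm v"
  define Di where "Di = diagm (\<chi> i. 1 / v$i)"
  have v1: "(\<chi> i. v$i * (\<chi> i. 1 / v$i)$i) = (\<chi> i. (1::real))" "(\<chi> i. (\<chi> i. 1 / v$i)$i * v$i) = (\<chi> i. (1::real))"
    using nz by (simp_all add: vec_eq_iff)
  have "D ** Di = mat 1" "Di ** D = mat 1"
    unfolding D_def Di_def diag_mult v1 diag_one by simp_all
  hence ex: "\<exists>A'. D ** A' = mat 1 \<and> A' ** D = mat 1" by blast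
  have "D ** matrix_inv D = mat 1 \<and> matrix_inv D ** D = mat 1"
    unfolding matrix_inv_def by (rule someI_ex[OF ex])
  hence iD: "matrix_inv D ** D = mat 1" by blast
  have Dones: "D *v ones = v"
    by (simp add: D_def diagm_def matrix_vector_mult_def ones_def vec_eq_iff)
  have eig': "A *v v = lam *s v" using eig by (simp add: vec_eq_iff)
  have key: "\<bar>det A\<bar> ^ k \<le> \<bar>lam\<bar> ^ k * tau p (matrix_inv D ** matpow A k ** D) ^ (CARD('n) - 1)"
    if p: "p \<ge> 1" for p k
  proof -
    define M where "M = matrix_inv D ** matpow A k ** D"
    have "M *v ones = matrix_inv D *v (matpow A k *v (D *v ones))"
      by (simp add: M_def matrix_vector_mul_assoc matrix_mul_assoc)
    also have "\<dots> = (lam ^ k) *s (matrix_inv D *v (D *v ones))"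
      by (simp add: Dones matpow_eig[OF eig'] vector_scalar_commute)
    also have "matrix_inv D *v (D *v ones) = ones" by (simp add: matrix_vector_mul_assoc iD)
    finally have eM: "M *v ones = (lam ^ k) *s ones" .
    have "det M = det A ^ k * (det (matrix_inv D) * det D)"
      by (simp add: M_def det_mul det_matpow)
    also have "det (matrix_inv D) * det D = 1" using iD det_mul[of "matrix_inv D" D] by simp
    finally have dM: "det M = det A ^ k" by simp
    have "\<bar>det M\<bar> \<le> \<bar>lam^k\<bar> * tau p M ^ (CARD('n) - 1)" by (rule main_ineq[OF p n2 eM])
    thus ?thesis unfolding M_def[symmetric] dM by (simp add: power_abs)
  qed
  have t0: "tau p (matrix_inv D ** matpow A k ** D) \<ge> 0" if "p \<ge> 1" for p k
    using tau_facts(1)[OF that n2] by blast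
  have nr: "real CARD('n) - 1 = real (CARD('n) - 1)" using n2 by simp
  have part1: "\<bar>det A\<bar> \<le> \<bar>lam\<bar> * (tau p (matrix_inv D ** matpow A k ** D)) powr ((real CARD('n) - 1) / real k)"
    if p: "p \<ge> 1" and k: "k \<ge> 1" for p k
    unfolding nr by (rule root_step[OF _ t0[OF p] k _ key[OF p]]) (use n2 in simp_all)
  show ?thesis
  proof (intro conjI allI impI)
    fix p :: enat and k :: nat assume pk: "p \<ge> 1" "k \<ge> 1"
    from part1[OF pk] show "\<bar>det A\<bar> \<le> \<bar>lam\<bar> * (tau p (matrix_inv (diagm v) ** matpow A k ** diagm v))
                                powr ((real CARD('n) - 1) / real k)"
      unfolding D_def .
  next
    fix p :: enat assume p: "p \<ge> 1"
    have k1: "CARD('n) - 1 \<ge> 1" using n2 by simp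
    have e1: "(real CARD('n) - 1) / real (CARD('n) - 1) = 1" unfolding nr using k1 by simp
    have "tau p (matrix_inv D ** matpow A (CARD('n) - 1) ** D) powr 1 = tau p (matrix_inv D ** matpow A (CARD('n) - 1) ** D)"
      by (rule powr_one[OF t0[OF p]])
    with part1[OF p k1] show "\<bar>det A\<bar> \<le> \<bar>lam\<bar> * tau p (matrix_inv (diagm v) ** matpow A (CARD('n) - 1) ** diagm v)"
      unfolding e1 D_def by simp
  qed
qed

end
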